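(* Let $M$ be a matroid on a finite set $E$ with $r(M)>0$. If $M$ is a unique expansion matroid, then its dual $M^*$ is a unique exchange matroid.
   Context: For a matroid $M=(E,\mathcal{I})$: $\mathcal{I}(M)$ its independent sets, $\mathcal{B}(M)$ its bases, $r(M)$ the size of a base. For $r(M)>0$, $s(M)=\{A\in\mathcal{I}(M): |A|=r(M)-1\}$. $M$ is a unique expansion matroid if for every $B\in\mathcal{B}(M)$ and every $A\in s(M)$, whenever $e_1,e_2\in B$ satisfy $A\cup\{e_1\}\in\mathcal{B}(M)$ and $A\cup\{e_2\}\in\mathcal{B}(M)$, then $e_1=e_2$. The dual $M^*$ is the matroid on $E$ with bases $\{E-B: B\in\mathcal{B}(M)\}$. A matroid $N$ is a unique exchange matroid if for all $B_1,B_2\in\mathcal{B}(N)$, whenever $x\in B_1-B_2$, $y_1,y_2\in B_2-B_1$, $(B_1-\{x\})\cup\{y_1\}\in\mathcal{B}(N)$ and $(B_1-\{x\})\cup\{y_2\}\in\mathcal{B}(N)$, then $y_1=y_2$. *)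

theory Defs
  imports Main
begin

definition matroid :: "'a set \<Rightarrow> 'a set set \<Rightarrow> bool" where
  "matroid E I \<longleftrightarrow> finite E \<and> I \<subseteq> Pow E \<and> {} \<in> I \<and>
     (\<forall>A B. B \<in> I \<and> A \<subseteq> B \<longrightarrow> A \<in> I) \<and>
     (\<forall>A B. A \<in> I \<and> B \<in> I \<and> card A < card B \<longrightarrow> (\<exists>e \<in> B - A. insert e A \<in> I))"

definition bases :: "'a set set \<Rightarrow> 'a set set" where
  "bases I = {B \<in> I. \<forall>X \<in> I. B \<subseteq> X \<longrightarrow> X = B}"

definition mrank :: "'a set set \<Rightarrow> nat" where
  "mrank I = card (SOME B. B \<in> bases I)"

definition s_sets :: "'a set set \<Rightarrow> 'a set set" where
  "s_sets I = {A \<in> I. card A = mrank I - 1}"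

definition unique_expansion :: "'a set set \<Rightarrow> bool" where
  "unique_expansion I \<longleftrightarrow>
     (\<forall>B \<in> bases I. \<forall>A \<in> s_sets I. \<forall>e1 e2.
        e1 \<in> B \<and> e2 \<in> B \<and> A \<union> {e1} \<in> bases I \<and> A \<union> {e2} \<in> bases I \<longrightarrow> e1 = e2)"

text \<open>Independent sets of the dual matroid M*: subsets of complements of bases
  (so that the bases of M* are exactly the sets E - B, B a base of M).\<close>
definition dual_indep :: "'a set \<Rightarrow> 'a set set \<Rightarrow> 'a set set" where
  "dual_indep E I = {X. \<exists>B \<in> bases I. X \<subseteq> E - B}"

definition unique_exchange :: "'a set set \<Rightarrow> bool" where
  "unique_exchange I \<longleftrightarrow>
     (\<forall>B1 \<in> bases I. \<forall>B2 \<in> bases I. \<forall>x y1 y2.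
        x \<in> B1 - B2 \<and> y1 \<in> B2 - B1 \<and> y2 \<in> B2 - B1 \<and>
        (B1 - {x}) \<union> {y1} \<in> bases I \<and> (B1 - {x}) \<union> {y2} \<in> bases I \<longrightarrow> y1 = y2)"

end

theory Submission
  imports Defs
begin

lemma m_fin: "matroid E I \<Longrightarrow> X \<in> I \<Longrightarrow> finite X \<and> X \<subseteq> E"
  unfolding matroid_def by (meson PowD finite_subset subsetD)

lemma m_down: "matroid E I \<Longrightarrow> B \<in> I \<Longrightarrow> A \<subseteq> B \<Longrightarrow> A \<in> I"
  unfolding matroid_def by blast

lemma m_aug: "matroid E I \<Longrightarrow> A \<in> I \<Longrightarrow> B \<in> I \<Longrightarrow> card A < card B \<Longrightarrow> \<exists>e\<in>B - A. insert e A \<in> I"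
  unfolding matroid_def by blast

lemma base_card_ge:
  assumes m: "matroid E I" and B: "B \<in> bases I" and X: "X \<in> I"
  shows "card X \<le> card B"
proof (rule ccontr)
  assume "\<not> card X \<le> card B"
  then obtain e where e: "e \<in> X - B" "insert e B \<in> I"
    using m_aug[OF m _ X] B unfolding bases_def by force
  then have "insert e B = B" using B unfolding bases_def by blast
  then show False using e by blast
qed

lemma base_card_eq:
  assumes m: "matroid E I" and "B1 \<in> bases I" "B2 \<in> bases I"
  shows "card B1 = card B2"
  using base_card_ge[OF m assms(2), of B2] base_card_ge[OF m assms(3), of B1] assms unfolding bases_def
  by auto

lemma indep_card_base:
  assumes m: "matroid E I" and B: "B \<in> bases I" and X: "X \<in> I" and c: "card X = card B"
  shows "X \<in> bases I"
proof -
  have "Y = X" if Y: "Y \<in> I" "X \<subseteq> Y" for Y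
  proof -
    have "card Y \<le> card X" using base_card_ge[OF m B Y(1)] c by simp
    moreover have "finite Y" using m_fin[OF m Y(1)] by simp
    ultimately show "Y = X" using card_seteq[of Y X] Y(2) by simp
  qed
  then show ?thesis using X unfolding bases_def by blast
qed

lemma exists_base:
  assumes m: "matroid E I" shows "\<exists>B. B \<in> bases I"
proof -
  have "finite I" using m unfolding matroid_def using finite_subset[of I "Pow E"] by simp
  moreover have "{} \<in> I" using m unfolding matroid_def by blast
  ultimately obtain B where "B \<in> I" "\<forall>b\<in>I. B \<le> b \<longrightarrow> B = b"
    using finite_has_maximal2 by blast
  then show ?thesis unfolding bases_def by blast
qed

lemma extend_base:
  assumes m: "matroid E I" and J: "J \<in> I" "J \<subseteq> S" and B0: "B0 \<in> bases I" "B0 \<subseteq> S"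
  shows "\<exists>B'. B' \<in> bases I \<and> J \<subseteq> B' \<and> B' \<subseteq> S"
proof -
  define F where "F = {X \<in> I. J \<subseteq> X \<and> X \<subseteq> S}"
  have "finite I" using m unfolding matroid_def using finite_subset[of I "Pow E"] by simp
  moreover have "F \<subseteq> I" unfolding F_def by blast
  ultimately have finF: "finite F" by (rule finite_subset[rotated])
  have JF: "J \<in> F" using J unfolding F_def by simp
  obtain B' where B': "B' \<in> F" and mx0: "\<forall>b\<in>F. B' \<le> b \<longrightarrow> B' = b"
    using finite_has_maximal2[OF finF JF] by (elim bexE conjE)
  have mx: "\<And>b. b \<in> F \<Longrightarrow> B' \<subseteq> b \<Longrightarrow> B' = b" using mx0 by simp
  have B'I: "B' \<in> I" and B'J: "J \<subseteq> B'" and B'S: "B' \<subseteq> S" using B' unfolding F_def by auto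
  have B0I: "B0 \<in> I" using B0(1) unfolding bases_def by simp
  have "card B' = card B0"
  proof (rule ccontr)
    assume "card B' \<noteq> card B0"
    then have "card B' < card B0" using base_card_ge[OF m B0(1) B'I] by simp
    then obtain e where e: "e \<in> B0 - B'" "insert e B' \<in> I"
      using m_aug[OF m B'I B0I] by blast
    have "insert e B' \<in> F" unfolding F_def using e B'J B'S B0(2) by blast
    then have "B' = insert e B'" using mx by blast
    then show False using e by blast
  qed
  then have "B' \<in> bases I" using indep_card_base[OF m B0(1) B'I] by simp
  then show ?thesis using B'J B'S by blast
qed

lemma dual_matroid:
  assumes m: "matroid E I"
  shows "matroid E (dual_indep E I)"
proof -
  have fin: "finite E" using m unfolding matroid_def by simp
  have augd: "\<exists>e \<in> Y - X. insert e X \<in> dual_indep E I"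
    if X: "X \<in> dual_indep E I" and Y: "Y \<in> dual_indep E I" and c: "card X < card Y" for X Y
  proof -
    obtain BX where BX: "BX \<in> bases I" "X \<subseteq> E - BX" using X unfolding dual_indep_def by blast
    obtain BY where BY: "BY \<in> bases I" "Y \<subseteq> E - BY" using Y unfolding dual_indep_def by blast
    have BYI: "BY \<in> I" using BY unfolding bases_def by blast
    have J: "BY - X \<in> I" using m_down[OF m BYI] by blast
    have "BX \<subseteq> E - X" using BX m_fin[OF m, of BX] unfolding bases_def by blast
    then obtain B' where B': "B' \<in> bases I" "BY - X \<subseteq> B'" "B' \<subseteq> E - X"
      using extend_base[OF m J, of "E - X" BX] BX BYI m_fin[OF m BYI] by blast
    have B'I: "B' \<in> I" using B'(1) unfolding bases_def by simp
    have finX: "finite X" "finite Y" "finite BY" "finite B'"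
      using finite_subset[OF BX(2)] finite_subset[OF BY(2)] fin m_fin[OF m BYI] m_fin[OF m B'I] by auto
    have cB: "card B' = card BY" using base_card_eq[OF m B'(1) BY(1)] .
    have sub: "B' \<inter> (Y - X) \<subseteq> B' - (BY - X)" using BY by blast
    have "card (B' \<inter> (Y - X)) \<le> card (B' - (BY - X))"
      using sub finX by (simp add: card_mono)
    also have "\<dots> = card B' - card (BY - X)" using B'(2) finX(3) by (intro card_Diff_subset) auto
    also have "\<dots> = card BY - card (BY - X)" using cB by simp
    also have "\<dots> = card (BY \<inter> X)"
      using card_Int_Diff[OF finX(3), of X] by simp
    also have "\<dots> \<le> card (X - Y)"
      using BY finX by (intro card_mono) auto
    also have "\<dots> < card (Y - X)"
      using c card_Int_Diff[OF finX(1), of Y] card_Int_Diff[OF finX(2), of X] by (simp add: Int_commute)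
    finally have "card (B' \<inter> (Y - X)) < card (Y - X)" .
    then obtain e where e: "e \<in> Y - X" "e \<notin> B'"
    proof -
      assume *: "card (B' \<inter> (Y - X)) < card (Y - X)"
        and r: "\<And>e. e \<in> Y - X \<Longrightarrow> e \<notin> B' \<Longrightarrow> thesis"
      show thesis
      proof (rule ccontr)
        assume "\<not> thesis"
        then have "B' \<inter> (Y - X) = Y - X" using r by blast
        then show False using * by simp
      qed
    qed
    have "insert e X \<subseteq> E - B'" using e B' BX(2) BY(2) by blast
    then show ?thesis using e B' unfolding dual_indep_def by blast
  qed
  show ?thesis unfolding matroid_def
  proof (intro conjI allI impI)
    show "finite E" by fact
    show "dual_indep E I \<subseteq> Pow E" unfolding dual_indep_def by blast
    show "{} \<in> dual_indep E I" using exists_base[OF m] unfolding dual_indep_def by blast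
  next
    fix A B assume "B \<in> dual_indep E I \<and> A \<subseteq> B"
    then show "A \<in> dual_indep E I" unfolding dual_indep_def by blast
  next
    fix A B assume "A \<in> dual_indep E I \<and> B \<in> dual_indep E I \<and> card A < card B"
    then show "\<exists>e\<in>B - A. insert e A \<in> dual_indep E I" using augd by blast
  qed
qed

lemma dual_bases:
  assumes m: "matroid E I"
  shows "bases (dual_indep E I) = (\<lambda>B. E - B) ` bases I"
proof
  show "bases (dual_indep E I) \<subseteq> (\<lambda>B. E - B) ` bases I"
  proof
    fix X assume X: "X \<in> bases (dual_indep E I)"
    then obtain B where B: "B \<in> bases I" "X \<subseteq> E - B" unfolding bases_def dual_indep_def by blast
    have "E - B \<in> dual_indep E I" using B unfolding dual_indep_def by blast
    then have "E - B = X" using X B unfolding bases_def by blast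
    then show "X \<in> (\<lambda>B. E - B) ` bases I" using B by blast
  qed
next
  show "(\<lambda>B. E - B) ` bases I \<subseteq> bases (dual_indep E I)"
  proof
    fix X assume "X \<in> (\<lambda>B. E - B) ` bases I"
    then obtain B where B: "B \<in> bases I" "X = E - B" by blast
    have BE: "B \<subseteq> E" using B m_fin[OF m] unfolding bases_def by blast
    have "Y = X" if Y: "Y \<in> dual_indep E I" "X \<subseteq> Y" for Y
    proof -
      obtain B2 where B2: "B2 \<in> bases I" "Y \<subseteq> E - B2" using Y unfolding dual_indep_def by blast
      have "B2 \<subseteq> E" using B2(1) m_fin[OF m] unfolding bases_def by blast
      then have "B2 \<subseteq> B" using B2 Y B BE by blast
      then have "B2 = B" using B2 B unfolding bases_def by blast
      then show ?thesis using B2 Y B by blast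
    qed
    moreover have "X \<in> dual_indep E I" using B unfolding dual_indep_def by blast
    ultimately show "X \<in> bases (dual_indep E I)" unfolding bases_def by blast
  qed
qed

theorem theorem11:
  fixes E :: "'a set" and I :: "'a set set"
  assumes "matroid E I"
    and "mrank I > 0"
    and "unique_expansion I"
  shows "matroid E (dual_indep E I) \<and> unique_exchange (dual_indep E I)"
proof
  note m = assms(1)
  show "matroid E (dual_indep E I)" using dual_matroid[OF m] .
  show "unique_exchange (dual_indep E I)"
    unfolding unique_exchange_def dual_bases[OF m]
  proof (intro ballI allI impI)
    fix C1 C2 x y1 y2
    assume C1: "C1 \<in> (\<lambda>B. E - B) ` bases I" and C2: "C2 \<in> (\<lambda>B. E - B) ` bases I"
      and h: "x \<in> C1 - C2 \<and> y1 \<in> C2 - C1 \<and> y2 \<in> C2 - C1 \<and>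
        C1 - {x} \<union> {y1} \<in> (\<lambda>B. E - B) ` bases I \<and> C1 - {x} \<union> {y2} \<in> (\<lambda>B. E - B) ` bases I"
    have hx: "x \<in> C1 - C2" and hy1: "y1 \<in> C2 - C1" and hy2: "y2 \<in> C2 - C1"
      and hD1: "C1 - {x} \<union> {y1} \<in> (\<lambda>B. E - B) ` bases I"
      and hD2: "C1 - {x} \<union> {y2} \<in> (\<lambda>B. E - B) ` bases I" using h by simp_all
    obtain B1 where B1: "B1 \<in> bases I" "C1 = E - B1" using C1 by blast
    obtain B2 where B2: "B2 \<in> bases I" "C2 = E - B2" using C2 by blast
    obtain D1 where D1: "D1 \<in> bases I" "C1 - {x} \<union> {y1} = E - D1" using hD1 by blast
    obtain D2 where D2: "D2 \<in> bases I" "C1 - {x} \<union> {y2} = E - D2" using hD2 by blast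
    have E1: "B1 \<subseteq> E" "D1 \<subseteq> E" "D2 \<subseteq> E"
      using B1(1) D1(1) D2(1) m_fin[OF m] unfolding bases_def by blast+
    have xy: "x \<in> E" "x \<notin> B1" "y1 \<in> B1" "y2 \<in> B1" "y1 \<in> E" "y2 \<in> E"
      using hx hy1 hy2 B1(2) B2(2) by auto
    have D1e: "D1 = insert x (B1 - {y1})"
    proof -
      have "D1 = E - (E - D1)" using E1 by blast
      also have "\<dots> = E - (C1 - {x} \<union> {y1})" using D1(2) by simp
      also have "\<dots> = insert x (B1 - {y1})" using B1(2) E1 xy by blast
      finally show ?thesis .
    qed
    have D2e: "D2 = insert x (B1 - {y2})"
    proof -
      have "D2 = E - (E - D2)" using E1 by blast
      also have "\<dots> = E - (C1 - {x} \<union> {y2})" using D2(2) by simp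
      also have "\<dots> = insert x (B1 - {y2})" using B1(2) E1 xy by blast
      finally show ?thesis .
    qed
    show "y1 = y2"
    proof (rule ccontr)
      assume ne: "y1 \<noteq> y2"
      define A where "A = insert x (B1 - {y1, y2})"
      have AI: "A \<in> I" using m_down[OF m, of D1 A] D1 D1e unfolding A_def bases_def by blast
      have finB1: "finite B1" using B1 m_fin[OF m] unfolding bases_def by blast
      have "card {y1, y2} \<le> card B1" using finB1 xy by (intro card_mono) auto
      then have c2: "2 \<le> card B1" using ne by simp
      have "card A = card B1 - 1"
        using finB1 xy ne c2 unfolding A_def by (simp add: card_Diff_subset)
      moreover have "mrank I = card B1"
        unfolding mrank_def using base_card_eq[OF m B1(1) someI_ex[OF exists_base[OF m]]]
        by simp
      ultimately have As: "A \<in> s_sets I" using AI unfolding s_sets_def by simp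
      have "A \<union> {y2} = D1" unfolding A_def D1e using ne xy by auto
      moreover have "A \<union> {y1} = D2" unfolding A_def D2e using ne xy by auto
      ultimately have c: "y2 \<in> B1 \<and> y1 \<in> B1 \<and> A \<union> {y2} \<in> bases I \<and> A \<union> {y1} \<in> bases I"
        using D1(1) D2(1) xy by simp
      have "\<forall>e1 e2. e1 \<in> B1 \<and> e2 \<in> B1 \<and> A \<union> {e1} \<in> bases I \<and> A \<union> {e2} \<in> bases I \<longrightarrow> e1 = e2"
        using assms(3) B1(1) As unfolding unique_expansion_def by (intro allI) simp
      then have "y2 = y1" using c by (elim allE impE) simp_all
      then show False using ne by simp
    qed
  qed
qed

end
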